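(* In the planar algebra $\mathcal P$ described in the context, the traces are: $\mathrm{tr}(\emptyset)=1$, $\mathrm{tr}(P_1)=2$, $\mathrm{tr}(P_2)=3$, $\mathrm{tr}(P_3)=4$, $\mathrm{tr}(P_4)=3$, $\mathrm{tr}(P_5)=2$, $\mathrm{tr}(P_6)=1$, $\mathrm{tr}(Q_4)=2$.
   Context: $\mathcal P$ is the unshaded planar algebra generated by a self-adjoint $S\in\mathcal P_4$ modulo: (i) a closed loop equals $2$; (ii) $S$ is uncuppable, uncappable and unsidecappable (multiplying by any Temperley–Lieb cup/cap element $e_j$ on top or bottom gives 0, and its left and right partial traces vanish); (iii) $S^2=6f^{(4)}+S$; (iv) the jellyfish relation: the rainbowed $S$ (all 8 strands bent to the bottom over the right) with an extra strand passing above it equals the same with the extra strand passing below the box, crossing over its 8 strands, crossings defined by the Kauffman rule crossing $=i\cdot(\text{A-smoothing})-i\cdot(\text{B-smoothing})$. Jones–Wenzl projections: $f^{(1)}=X$ (single strand), $f^{(k+1)}=f^{(k)}\otimes X-\frac{k}{k+1}(f^{(k)}\otimes X)e_k(f^{(k)}\otimes X)$, where $e_k$ has a cap and cup at positions $k,k+1$. Define $P_1=X$, $P_2=f^{(2)}$, $P_3=f^{(3)}$, $P_4=\frac35f^{(4)}-\frac15S$, $Q_4=\frac25f^{(4)}+\frac15S$, $P_5=P_4\otimes X-\frac43(P_4\otimes X)e_4(P_4\otimes X)$, $P_6=P_5\otimes X-\frac32(P_5\otimes X)e_5(P_5\otimes X)$. $\mathrm{tr}$ is the (right) trace, closing up all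 strands. *)

theory Defs
  imports Complex_Main
begin

section \<open>Unshaded planar algebras, presented as C-linear strict pivotal dagger categories
  generated by one symmetrically self-dual object (the single strand X)\<close>

text \<open>Hom k l is the space of diagrams with k boundary points at the bottom and l at the top;
  the n-box space P_n is Hom n n.  cmp g f is "g on top of f" (g after f), tns f g places
  f to the left of g.\<close>

record 'm pa =
  Hom  :: "nat \<Rightarrow> nat \<Rightarrow> 'm set"
  cmp  :: "'m \<Rightarrow> 'm \<Rightarrow> 'm"
  tns  :: "'m \<Rightarrow> 'm \<Rightarrow> 'm"
  idn  :: "nat \<Rightarrow> 'm"
  cupm :: 'm
  capm :: 'm
  scl  :: "complex \<Rightarrow> 'm \<Rightarrow> 'm"
  adj  :: "'m \<Rightarrow> 'm"

fun ev :: "'m pa \<Rightarrow> nat \<Rightarrow> 'm" where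
  "ev A 0 = idn A 0"
| "ev A (Suc n) = cmp A (ev A n) (tns A (tns A (idn A n) (capm A)) (idn A n))"

fun coev :: "'m pa \<Rightarrow> nat \<Rightarrow> 'm" where
  "coev A 0 = idn A 0"
| "coev A (Suc n) = cmp A (tns A (tns A (idn A n) (cupm A)) (idn A n)) (coev A n)"

text \<open>Right and left transposes (rotations by pi) of x in Hom k l.\<close>
definition rtrans :: "'m pa \<Rightarrow> nat \<Rightarrow> nat \<Rightarrow> 'm \<Rightarrow> 'm" where
  "rtrans A k l x = cmp A (tns A (idn A k) (ev A l))
      (cmp A (tns A (tns A (idn A k) x) (idn A l)) (tns A (coev A k) (idn A l)))"

definition ltrans :: "'m pa \<Rightarrow> nat \<Rightarrow> nat \<Rightarrow> 'm \<Rightarrow> 'm" where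
  "ltrans A k l x = cmp A (tns A (ev A l) (idn A k))
      (cmp A (tns A (tns A (idn A l) x) (idn A k)) (tns A (idn A l) (coev A k)))"

definition is_planar_algebra :: "('m::ab_group_add) pa \<Rightarrow> bool" where
  "is_planar_algebra A \<longleftrightarrow>
    \<comment> \<open>complex vector space structure\<close>
    (\<forall>a x y. scl A a (x + y) = scl A a x + scl A a y) \<and>
    (\<forall>a b x. scl A (a + b) x = scl A a x + scl A b x) \<and>
    (\<forall>a b x. scl A a (scl A b x) = scl A (a * b) x) \<and>
    (\<forall>x. scl A 1 x = x) \<and>
    \<comment> \<open>each Hom k l is a subspace\<close>
    (\<forall>k l. 0 \<in> Hom A k l \<and> (\<forall>x\<in>Hom A k l. \<forall>y\<in>Hom A k l. x + y \<in> Hom A k l)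
        \<and> (\<forall>a. \<forall>x\<in>Hom A k l. scl A a x \<in> Hom A k l)) \<and>
    \<comment> \<open>typing\<close>
    (\<forall>k l m f g. f \<in> Hom A k l \<longrightarrow> g \<in> Hom A l m \<longrightarrow> cmp A g f \<in> Hom A k m) \<and>
    (\<forall>k l k' l' f g. f \<in> Hom A k l \<longrightarrow> g \<in> Hom A k' l' \<longrightarrow> tns A f g \<in> Hom A (k + k') (l + l')) \<and>
    (\<forall>n. idn A n \<in> Hom A n n) \<and> cupm A \<in> Hom A 0 2 \<and> capm A \<in> Hom A 2 0 \<and>
    (\<forall>k l x. x \<in> Hom A k l \<longrightarrow> adj A x \<in> Hom A l k) \<and>
    \<comment> \<open>category\<close>
    (\<forall>k l m p f g h. f \<in> Hom A k l \<longrightarrow> g \<in> Hom A l m \<longrightarrow> h \<in> Hom A m p \<longrightarrow>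
        cmp A h (cmp A g f) = cmp A (cmp A h g) f) \<and>
    (\<forall>k l f. f \<in> Hom A k l \<longrightarrow> cmp A (idn A l) f = f \<and> cmp A f (idn A k) = f) \<and>
    \<comment> \<open>strict monoidal structure\<close>
    (\<forall>k l k' l' k'' l'' f g h. f \<in> Hom A k l \<longrightarrow> g \<in> Hom A k' l' \<longrightarrow> h \<in> Hom A k'' l'' \<longrightarrow>
        tns A (tns A f g) h = tns A f (tns A g h)) \<and>
    (\<forall>k l f. f \<in> Hom A k l \<longrightarrow> tns A (idn A 0) f = f \<and> tns A f (idn A 0) = f) \<and>
    (\<forall>m n. tns A (idn A m) (idn A n) = idn A (m + n)) \<and>
    (\<forall>k l m k' l' m' f g f' g'. f \<in> Hom A k l \<longrightarrow> g \<in> Hom A l m \<longrightarrow>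
        f' \<in> Hom A k' l' \<longrightarrow> g' \<in> Hom A l' m' \<longrightarrow>
        tns A (cmp A g f) (cmp A g' f') = cmp A (tns A g g') (tns A f f')) \<and>
    \<comment> \<open>bilinearity\<close>
    (\<forall>k l m f f' g g' a. f \<in> Hom A k l \<longrightarrow> f' \<in> Hom A k l \<longrightarrow> g \<in> Hom A l m \<longrightarrow> g' \<in> Hom A l m \<longrightarrow>
        cmp A (g + g') f = cmp A g f + cmp A g' f \<and> cmp A g (f + f') = cmp A g f + cmp A g f' \<and>
        cmp A (scl A a g) f = scl A a (cmp A g f) \<and> cmp A g (scl A a f) = scl A a (cmp A g f)) \<and>
    (\<forall>k l k' l' f f' g g' a. f \<in> Hom A k l \<longrightarrow> f' \<in> Hom A k l \<longrightarrow> g \<in> Hom A k' l' \<longrightarrow> g' \<in> Hom A k' l' \<longrightarrow>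
        tns A (f + f') g = tns A f g + tns A f' g \<and> tns A f (g + g') = tns A f g + tns A f g' \<and>
        tns A (scl A a f) g = scl A a (tns A f g) \<and> tns A f (scl A a g) = scl A a (tns A f g)) \<and>
    \<comment> \<open>zigzag (isotopy) relations for the self-dual strand\<close>
    cmp A (tns A (capm A) (idn A 1)) (tns A (idn A 1) (cupm A)) = idn A 1 \<and>
    cmp A (tns A (idn A 1) (capm A)) (tns A (cupm A) (idn A 1)) = idn A 1 \<and>
    \<comment> \<open>pivotality: rotating by pi clockwise or anticlockwise agrees (full rotation is trivial)\<close>
    (\<forall>k l x. x \<in> Hom A k l \<longrightarrow> ltrans A k l x = rtrans A k l x) \<and>
    \<comment> \<open>dagger (star) structure: reflection in a horizontal line, antilinear\<close>
    (\<forall>k l x. x \<in> Hom A k l \<longrightarrow> adj A (adj A x) = x) \<and>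
    (\<forall>k l m f g. f \<in> Hom A k l \<longrightarrow> g \<in> Hom A l m \<longrightarrow> adj A (cmp A g f) = cmp A (adj A f) (adj A g)) \<and>
    (\<forall>k l k' l' f g. f \<in> Hom A k l \<longrightarrow> g \<in> Hom A k' l' \<longrightarrow> adj A (tns A f g) = tns A (adj A f) (adj A g)) \<and>
    (\<forall>n. adj A (idn A n) = idn A n) \<and> adj A (cupm A) = capm A \<and>
    (\<forall>k l x y a. x \<in> Hom A k l \<longrightarrow> y \<in> Hom A k l \<longrightarrow>
        adj A (x + y) = adj A x + adj A y \<and> adj A (scl A a x) = scl A (cnj a) (adj A x))"

definition tr :: "'m pa \<Rightarrow> nat \<Rightarrow> 'm \<Rightarrow> 'm" where
  "tr A n x = cmp A (ev A n) (cmp A (tns A x (idn A n)) (coev A n))"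

definition TLe :: "'m pa \<Rightarrow> nat \<Rightarrow> nat \<Rightarrow> 'm" where
  "TLe A n j = tns A (tns A (idn A (j - 1)) (cmp A (cupm A) (capm A))) (idn A (n - j - 1))"

fun jw :: "('m::ab_group_add) pa \<Rightarrow> nat \<Rightarrow> 'm" where
  "jw A 0 = idn A 0"
| "jw A (Suc 0) = idn A 1"
| "jw A (Suc (Suc k)) =
     (let a = tns A (jw A (Suc k)) (idn A 1)
      in a - scl A (of_nat (Suc k) / of_nat (Suc (Suc k)))
               (cmp A (cmp A a (TLe A (Suc (Suc k)) (Suc k))) a))"

text \<open>Crossing by the Kauffman rule: i (A-smoothing) - i (B-smoothing).  (The mirror
  crossing is the negative of this one; the jellyfish relation below involves 8 crossings,
  so it does not depend on this convention.)\<close>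
definition xing :: "('m::ab_group_add) pa \<Rightarrow> 'm" where
  "xing A = scl A \<i> (idn A 2) - scl A \<i> (cmp A (cupm A) (capm A))"

definition xat :: "('m::ab_group_add) pa \<Rightarrow> nat \<Rightarrow> 'm" where
  "xat A j = tns A (tns A (idn A (j - 1)) (xing A)) (idn A (9 - j - 1))"

fun brd :: "('m::ab_group_add) pa \<Rightarrow> nat \<Rightarrow> 'm" where
  "brd A 0 = idn A 9"
| "brd A (Suc j) = cmp A (xat A (Suc j)) (brd A j)"

definition rainbow :: "'m pa \<Rightarrow> 'm \<Rightarrow> 'm" where
  "rainbow A S = cmp A (ev A 4) (tns A S (idn A 4))"

text \<open>Jellyfish relation: extra strand passing above the rainbowed S equals the extra
  strand passing below it, crossing its 8 strands.\<close>
definition jellyfish :: "('m::ab_group_add) pa \<Rightarrow> 'm \<Rightarrow> bool" where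
  "jellyfish A S \<longleftrightarrow>
     cmp A (capm A) (tns A (tns A (idn A 1) (rainbow A S)) (idn A 1))
   = cmp A (tns A (rainbow A S) (capm A)) (tns A (brd A 8) (idn A 1))"

definition generator_rels :: "('m::ab_group_add) pa \<Rightarrow> 'm \<Rightarrow> bool" where
  "generator_rels A S \<longleftrightarrow>
     S \<in> Hom A 4 4 \<and> adj A S = S \<and>
     cmp A (capm A) (cupm A) = scl A 2 (idn A 0) \<and>
     (\<forall>j\<in>{1,2,3}. cmp A (TLe A 4 j) S = 0 \<and> cmp A S (TLe A 4 j) = 0) \<and>
     cmp A (tns A (idn A 3) (capm A)) (cmp A (tns A S (idn A 1)) (tns A (idn A 3) (cupm A))) = 0 \<and>
     cmp A (tns A (capm A) (idn A 3)) (cmp A (tns A (idn A 1) S) (tns A (cupm A) (idn A 3))) = 0 \<and>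
     cmp A S S = scl A 6 (jw A 4) + S \<and>
     jellyfish A S"

definition P4 :: "('m::ab_group_add) pa \<Rightarrow> 'm \<Rightarrow> 'm" where
  "P4 A S = scl A (3/5) (jw A 4) - scl A (1/5) S"

definition Q4 :: "('m::ab_group_add) pa \<Rightarrow> 'm \<Rightarrow> 'm" where
  "Q4 A S = scl A (2/5) (jw A 4) + scl A (1/5) S"

definition P5 :: "('m::ab_group_add) pa \<Rightarrow> 'm \<Rightarrow> 'm" where
  "P5 A S = (let a = tns A (P4 A S) (idn A 1)
             in a - scl A (4/3) (cmp A (cmp A a (TLe A 5 4)) a))"

definition P6 :: "('m::ab_group_add) pa \<Rightarrow> 'm \<Rightarrow> 'm" where
  "P6 A S = (let a = tns A (P5 A S) (idn A 1)
             in a - scl A (3/2) (cmp A (cmp A a (TLe A 6 5)) a))"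

end

theory Submission
  imports Defs
begin

locale PA = fixes A :: "('m::ab_group_add) pa" assumes PA: "is_planar_algebra A"
begin

lemmas PAD = PA[unfolded is_planar_algebra_def]

lemma scl_add_r: "scl A a (x + y) = scl A a x + scl A a y" using PAD by (elim conjE) blast
lemma scl_add_l: "scl A (a + b) x = scl A a x + scl A b x" using PAD by (elim conjE) blast
lemma scl_scl: "scl A a (scl A b x) = scl A (a * b) x" using PAD by (elim conjE) blast
lemma scl_one: "scl A 1 x = x" using PAD by (elim conjE) blast
lemma hom_zero: "0 \<in> Hom A k l" using PAD by (elim conjE) blast
lemma homs: "\<forall>k l. 0 \<in> Hom A k l \<and> (\<forall>x\<in>Hom A k l. \<forall>y\<in>Hom A k l. x + y \<in> Hom A k l)
        \<and> (\<forall>a. \<forall>x\<in>Hom A k l. scl A a x \<in> Hom A k l)"  using PAD by (elim conjE) assumption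
lemma hom_add: "x \<in> Hom A k l \<Longrightarrow> y \<in> Hom A k l \<Longrightarrow> x + y \<in> Hom A k l" using homs by blast
lemma hom_scl: "x \<in> Hom A k l \<Longrightarrow> scl A a x \<in> Hom A k l" using homs by blast
lemma cmp_hom_all: "\<forall>k l m f g. f \<in> Hom A k l \<longrightarrow> g \<in> Hom A l m \<longrightarrow> cmp A g f \<in> Hom A k m" using PAD by (elim conjE) assumption
lemma cmp_hom: "f \<in> Hom A k l \<Longrightarrow> g \<in> Hom A l m \<Longrightarrow> cmp A g f \<in> Hom A k m" using cmp_hom_all by blast
lemma tns_hom_all: "\<forall>k l k' l' f g. f \<in> Hom A k l \<longrightarrow> g \<in> Hom A k' l' \<longrightarrow> tns A f g \<in> Hom A (k + k') (l + l')" using PAD by (elim conjE) assumption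
lemma tns_hom0: "f \<in> Hom A k l \<Longrightarrow> g \<in> Hom A k' l' \<Longrightarrow> tns A f g \<in> Hom A (k + k') (l + l')" using tns_hom_all by blast
lemma idn_hom_all: "\<forall>n. idn A n \<in> Hom A n n" using PAD by (elim conjE) assumption
lemma idn_hom: "idn A n \<in> Hom A n n" using idn_hom_all by blast
lemma cup_hom: "cupm A \<in> Hom A 0 2" using PAD by (elim conjE) blast
lemma cap_hom: "capm A \<in> Hom A 2 0" using PAD by (elim conjE) blast
lemma cmp_assoc_all: "\<forall>k l m p f g h. f \<in> Hom A k l \<longrightarrow> g \<in> Hom A l m \<longrightarrow> h \<in> Hom A m p \<longrightarrow>
        cmp A h (cmp A g f) = cmp A (cmp A h g) f" using PAD by (elim conjE) assumption
lemma cmp_assoc: "f \<in> Hom A k l \<Longrightarrow> g \<in> Hom A l m \<Longrightarrow> h \<in> Hom A m p \<Longrightarrow>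
        cmp A h (cmp A g f) = cmp A (cmp A h g) f" using cmp_assoc_all by blast
lemma cmp_id_all: "\<forall>k l f. f \<in> Hom A k l \<longrightarrow> cmp A (idn A l) f = f \<and> cmp A f (idn A k) = f" using PAD by (elim conjE) assumption
lemma cmp_id_l: "f \<in> Hom A k l \<Longrightarrow> cmp A (idn A l) f = f" using cmp_id_all by blast
lemma cmp_id_r: "f \<in> Hom A k l \<Longrightarrow> cmp A f (idn A k) = f" using cmp_id_all by blast
lemma tns_assoc_all: "\<forall>k l k' l' k'' l'' f g h. f \<in> Hom A k l \<longrightarrow> g \<in> Hom A k' l' \<longrightarrow> h \<in> Hom A k'' l'' \<longrightarrow>
        tns A (tns A f g) h = tns A f (tns A g h)" using PAD by (elim conjE) assumption
lemma tns_assoc: "f \<in> Hom A k l \<Longrightarrow> g \<in> Hom A k' l' \<Longrightarrow> h \<in> Hom A k'' l'' \<Longrightarrow>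
        tns A (tns A f g) h = tns A f (tns A g h)" using tns_assoc_all by blast
lemma tns_id0_all: "\<forall>k l f. f \<in> Hom A k l \<longrightarrow> tns A (idn A 0) f = f \<and> tns A f (idn A 0) = f" using PAD by (elim conjE) assumption
lemma tns_id0_l: "f \<in> Hom A k l \<Longrightarrow> tns A (idn A 0) f = f" using tns_id0_all by blast
lemma tns_id0_r: "f \<in> Hom A k l \<Longrightarrow> tns A f (idn A 0) = f" using tns_id0_all by blast
lemma tns_idn_all: "\<forall>m n. tns A (idn A m) (idn A n) = idn A (m + n)" using PAD by (elim conjE) assumption
lemma tns_idn: "tns A (idn A m) (idn A n) = idn A (m + n)" using tns_idn_all by blast
lemma interchange_all: "\<forall>k l m k' l' m' f g f' g'. f \<in> Hom A k l \<longrightarrow> g \<in> Hom A l m \<longrightarrow>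
        f' \<in> Hom A k' l' \<longrightarrow> g' \<in> Hom A l' m' \<longrightarrow>
        tns A (cmp A g f) (cmp A g' f') = cmp A (tns A g g') (tns A f f')" using PAD by (elim conjE) assumption
lemma interchange: "f \<in> Hom A k l \<Longrightarrow> g \<in> Hom A l m \<Longrightarrow>
        f' \<in> Hom A k' l' \<Longrightarrow> g' \<in> Hom A l' m' \<Longrightarrow>
        tns A (cmp A g f) (cmp A g' f') = cmp A (tns A g g') (tns A f f')" using interchange_all by blast
lemma cmp_lin_all: "\<forall>k l m f f' g g' a. f \<in> Hom A k l \<longrightarrow> f' \<in> Hom A k l \<longrightarrow> g \<in> Hom A l m \<longrightarrow> g' \<in> Hom A l m \<longrightarrow>
        cmp A (g + g') f = cmp A g f + cmp A g' f \<and> cmp A g (f + f') = cmp A g f + cmp A g f' \<and>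
        cmp A (scl A a g) f = scl A a (cmp A g f) \<and> cmp A g (scl A a f) = scl A a (cmp A g f)" using PAD by (elim conjE) assumption
lemma tns_lin_all: "\<forall>k l k' l' f f' g g' a. f \<in> Hom A k l \<longrightarrow> f' \<in> Hom A k l \<longrightarrow> g \<in> Hom A k' l' \<longrightarrow> g' \<in> Hom A k' l' \<longrightarrow>
        tns A (f + f') g = tns A f g + tns A f' g \<and> tns A f (g + g') = tns A f g + tns A f g' \<and>
        tns A (scl A a f) g = scl A a (tns A f g) \<and> tns A f (scl A a g) = scl A a (tns A f g)" using PAD by (elim conjE) assumption
lemma zig1: "cmp A (tns A (capm A) (idn A 1)) (tns A (idn A 1) (cupm A)) = idn A 1" using PAD by (elim conjE) assumption
lemma zig2: "cmp A (tns A (idn A 1) (capm A)) (tns A (cupm A) (idn A 1)) = idn A 1" using PAD by (elim conjE) assumption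

end


context PA begin
lemma tns_hom: "f \<in> Hom A k l \<Longrightarrow> g \<in> Hom A k' l' \<Longrightarrow> n = k + k' \<Longrightarrow> m = l + l' \<Longrightarrow> tns A f g \<in> Hom A n m"
  using tns_hom0 by blast

lemma scl_zero_l: "scl A 0 x = 0"
proof -
  have "scl A 0 x + scl A 0 x = scl A 0 x" using scl_add_l[of 0 0 x] by (metis add_0_right)
  then show ?thesis by (metis add_cancel_left_right)
qed
lemma scl_zero_r: "scl A a 0 = 0"
proof -
  have "scl A a 0 + scl A a 0 = scl A a 0" using scl_add_r[of a 0 0] by (metis add_0_right)
  then show ?thesis by (metis add_cancel_left_right)
qed
lemma scl_neg1: "scl A (-1) x = - x"
proof -
  have "scl A 1 x + scl A (-1) x = scl A 0 x" using scl_add_l[of 1 "-1" x] by simp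
  then have "x + scl A (-1) x = 0" by (simp only: scl_one scl_zero_l)
  then show ?thesis by (simp add: add_eq_0_iff)
qed
lemma scl_uminus_r: "scl A a (- x) = - scl A a x"
proof -
  have "scl A a (- x) = scl A a (scl A (-1) x)" by (simp only: scl_neg1)
  also have "\<dots> = scl A (-1) (scl A a x)" by (simp only: scl_scl mult.commute)
  finally show ?thesis by (simp only: scl_neg1)
qed
lemma scl_diff_r: "scl A a (x - y) = scl A a x - scl A a y"
  by (simp only: diff_conv_add_uminus scl_add_r scl_uminus_r)
lemma scl_diff_l: "scl A (a - b) x = scl A a x - scl A b x"
proof -
  have "scl A (a - b) x + scl A b x = scl A a x" using scl_add_l[of "a-b" b x] by simp
  then show ?thesis by (metis eq_diff_eq)
qed
lemma hom_uminus: "x \<in> Hom A k l \<Longrightarrow> - x \<in> Hom A k l" using hom_scl[of x k l "-1"] by (simp only: scl_neg1)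
lemma hom_diff: "x \<in> Hom A k l \<Longrightarrow> y \<in> Hom A k l \<Longrightarrow> x - y \<in> Hom A k l"
  by (simp only: diff_conv_add_uminus hom_add hom_uminus)

lemma cmp_add_l: "f \<in> Hom A k l \<Longrightarrow> g \<in> Hom A l m \<Longrightarrow> g' \<in> Hom A l m \<Longrightarrow> cmp A (g + g') f = cmp A g f + cmp A g' f"
  using cmp_lin_all by blast
lemma cmp_add_r: "f \<in> Hom A k l \<Longrightarrow> f' \<in> Hom A k l \<Longrightarrow> g \<in> Hom A l m \<Longrightarrow> cmp A g (f + f') = cmp A g f + cmp A g f'"
  using cmp_lin_all by blast
lemma cmp_scl_l: "f \<in> Hom A k l \<Longrightarrow> g \<in> Hom A l m \<Longrightarrow> cmp A (scl A a g) f = scl A a (cmp A g f)"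
  using cmp_lin_all by blast
lemma cmp_scl_r: "f \<in> Hom A k l \<Longrightarrow> g \<in> Hom A l m \<Longrightarrow> cmp A g (scl A a f) = scl A a (cmp A g f)"
  using cmp_lin_all by blast
lemma tns_add_l: "f \<in> Hom A k l \<Longrightarrow> f' \<in> Hom A k l \<Longrightarrow> g \<in> Hom A k' l' \<Longrightarrow> tns A (f + f') g = tns A f g + tns A f' g"
  using tns_lin_all by blast
lemma tns_add_r: "f \<in> Hom A k l \<Longrightarrow> g \<in> Hom A k' l' \<Longrightarrow> g' \<in> Hom A k' l' \<Longrightarrow> tns A f (g + g') = tns A f g + tns A f g'"
  using tns_lin_all by blast
lemma tns_scl_l: "f \<in> Hom A k l \<Longrightarrow> g \<in> Hom A k' l' \<Longrightarrow> tns A (scl A a f) g = scl A a (tns A f g)"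
  using tns_lin_all by blast
lemma tns_scl_r: "f \<in> Hom A k l \<Longrightarrow> g \<in> Hom A k' l' \<Longrightarrow> tns A f (scl A a g) = scl A a (tns A f g)"
  using tns_lin_all by blast

lemma cmp_zero_l: "f \<in> Hom A k l \<Longrightarrow> cmp A 0 f = 0"
  using cmp_scl_l[of f k l 0 0 0] hom_zero by (simp add: scl_zero_l)
lemma cmp_zero_r: "g \<in> Hom A l m \<Longrightarrow> cmp A g 0 = 0"
  using cmp_scl_r[of 0 l l g m 0] hom_zero by (simp add: scl_zero_l)
lemma tns_zero_l: "g \<in> Hom A k' l' \<Longrightarrow> tns A 0 g = 0"
  using tns_scl_l[of 0 0 0 g k' l' 0] hom_zero by (simp add: scl_zero_l)
lemma tns_zero_r: "f \<in> Hom A k l \<Longrightarrow> tns A f 0 = 0"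
  using tns_scl_r[of f k l 0 0 0 0] hom_zero by (simp add: scl_zero_l)

lemma minus_scl: "x - y = x + scl A (-1) y" by (simp add: scl_neg1)
lemma cmp_diff_l: "f \<in> Hom A k l \<Longrightarrow> g \<in> Hom A l m \<Longrightarrow> g' \<in> Hom A l m \<Longrightarrow> cmp A (g - g') f = cmp A g f - cmp A g' f"
  unfolding minus_scl by (simp only: cmp_add_l hom_scl cmp_scl_l)
lemma cmp_diff_r: "f \<in> Hom A k l \<Longrightarrow> f' \<in> Hom A k l \<Longrightarrow> g \<in> Hom A l m \<Longrightarrow> cmp A g (f - f') = cmp A g f - cmp A g f'"
  unfolding minus_scl by (simp only: cmp_add_r hom_scl cmp_scl_r)
lemma tns_diff_l: "f \<in> Hom A k l \<Longrightarrow> f' \<in> Hom A k l \<Longrightarrow> g \<in> Hom A k' l' \<Longrightarrow> tns A (f - f') g = tns A f g - tns A f' g"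
  unfolding minus_scl by (simp only: tns_add_l hom_scl tns_scl_l)
lemma tns_diff_r: "f \<in> Hom A k l \<Longrightarrow> g \<in> Hom A k' l' \<Longrightarrow> g' \<in> Hom A k' l' \<Longrightarrow> tns A f (g - g') = tns A f g - tns A f g'"
  unfolding minus_scl by (simp only: tns_add_r hom_scl tns_scl_r)

lemmas tyR = cmp_hom tns_hom idn_hom cup_hom cap_hom hom_add hom_diff hom_scl hom_uminus hom_zero

end


definition lift :: "'m pa \<Rightarrow> 'm \<Rightarrow> 'm" where "lift A x = tns A x (idn A 1)"
definition ptr :: "'m pa \<Rightarrow> nat \<Rightarrow> 'm \<Rightarrow> 'm" where
  "ptr A n x = cmp A (tns A (idn A n) (capm A)) (cmp A (tns A x (idn A 1)) (tns A (idn A n) (cupm A)))"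
definition EE :: "'m pa \<Rightarrow> nat \<Rightarrow> 'm" where "EE A m = tns A (idn A m) (cmp A (cupm A) (capm A))"

context PA begin

lemma lift_hom: "x \<in> Hom A k l \<Longrightarrow> k' = Suc k \<Longrightarrow> l' = Suc l \<Longrightarrow> lift A x \<in> Hom A k' l'"
  unfolding lift_def by (rule tyR | assumption | simp)+
lemma ptr_hom: "x \<in> Hom A k k \<Longrightarrow> k = Suc n \<Longrightarrow> ptr A n x \<in> Hom A n n"
  unfolding ptr_def by (rule tyR | assumption | simp)+
lemma EE_hom: "a = m + 2 \<Longrightarrow> b = m + 2 \<Longrightarrow> EE A m \<in> Hom A a b"
  unfolding EE_def by (rule tyR | assumption | simp)+
lemma ev_hom: "ev A n \<in> Hom A (n+n) 0"
  by (induction n) ((rule tyR | assumption | simp)+)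
lemma coev_hom: "coev A n \<in> Hom A 0 (n+n)"
  by (induction n) ((rule tyR | assumption | simp)+)

lemmas tyR2 = tyR lift_hom ptr_hom EE_hom ev_hom coev_hom

lemma tr_Suc:
  assumes x: "x \<in> Hom A (Suc n) (Suc n)"
  shows "tr A (Suc n) x = tr A n (ptr A n x)"
proof -
  define CAP where "CAP = tns A (idn A n) (capm A)"
  define CUP where "CUP = tns A (idn A n) (cupm A)"
  define X1 where "X1 = tns A x (idn A 1)"
  have hCAP: "CAP \<in> Hom A (n+2) n" unfolding CAP_def by (rule tyR | assumption | simp)+
  have hCUP: "CUP \<in> Hom A n (n+2)" unfolding CUP_def by (rule tyR | assumption | simp)+
  have hX1: "X1 \<in> Hom A (n+2) (n+2)" unfolding X1_def by (rule tyR x | simp)+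
  define Cap' where "Cap' = tns A CAP (idn A n)"
  define Cup' where "Cup' = tns A CUP (idn A n)"
  define Xn where "Xn = tns A X1 (idn A n)"
  have hCap': "Cap' \<in> Hom A (n+n+2) (n+n)" unfolding Cap'_def by (rule tyR hCAP | simp)+
  have hCup': "Cup' \<in> Hom A (n+n) (n+n+2)" unfolding Cup'_def by (rule tyR hCUP | simp)+
  have hXn: "Xn \<in> Hom A (n+n+2) (n+n+2)" unfolding Xn_def by (rule tyR hX1 | simp)+
  have e1: "ev A (Suc n) = cmp A (ev A n) Cap'" by (simp add: Cap'_def CAP_def)
  have e2: "coev A (Suc n) = cmp A Cup' (coev A n)" by (simp add: Cup'_def CUP_def)
  have e3: "tns A x (idn A (Suc n)) = Xn"
  proof -
    have "idn A (Suc n) = tns A (idn A 1) (idn A n)" by (simp add: tns_idn)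
    then show ?thesis unfolding Xn_def X1_def using tns_assoc[OF x idn_hom idn_hom] by simp
  qed
  have M: "cmp A Cap' (cmp A Xn Cup') = tns A (ptr A n x) (idn A n)"
  proof -
    have "cmp A Xn Cup' = tns A (cmp A X1 CUP) (cmp A (idn A n) (idn A n))"
      unfolding Xn_def Cup'_def by (rule interchange[OF hCUP hX1 idn_hom idn_hom, symmetric])
    also have "\<dots> = tns A (cmp A X1 CUP) (idn A n)" using cmp_id_l[OF idn_hom] by simp
    finally have a: "cmp A Xn Cup' = tns A (cmp A X1 CUP) (idn A n)" .
    have hXC: "cmp A X1 CUP \<in> Hom A n (n+2)" using hCUP hX1 by (rule cmp_hom)
    have "cmp A Cap' (cmp A Xn Cup') = tns A (cmp A CAP (cmp A X1 CUP)) (cmp A (idn A n) (idn A n))"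
      unfolding a Cap'_def by (rule interchange[OF hXC hCAP idn_hom idn_hom, symmetric])
    also have "\<dots> = tns A (ptr A n x) (idn A n)" using cmp_id_l[OF idn_hom] by (simp add: ptr_def CAP_def X1_def CUP_def)
    finally show ?thesis .
  qed
  have hev: "ev A n \<in> Hom A (n+n) 0" by (rule ev_hom)
  have hco: "coev A n \<in> Hom A 0 (n+n)" by (rule coev_hom)
  have "tr A (Suc n) x = cmp A (cmp A (ev A n) Cap') (cmp A Xn (cmp A Cup' (coev A n)))"
    unfolding tr_def e1 e2 e3 ..
  also have "\<dots> = cmp A (ev A n) (cmp A Cap' (cmp A Xn (cmp A Cup' (coev A n))))"
    by (rule cmp_assoc[symmetric]) (rule tyR hCap' hXn hCup' hev hco | assumption)+
  also have "cmp A Xn (cmp A Cup' (coev A n)) = cmp A (cmp A Xn Cup') (coev A n)"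
    by (rule cmp_assoc[OF hco hCup' hXn])
  also have "cmp A Cap' (cmp A (cmp A Xn Cup') (coev A n)) = cmp A (cmp A Cap' (cmp A Xn Cup')) (coev A n)"
    by (rule cmp_assoc[OF hco]) (rule tyR hCap' hXn hCup' hev hco | assumption)+
  finally show ?thesis unfolding M tr_def .
qed

lemma tr_0: "x \<in> Hom A 0 0 \<Longrightarrow> tr A 0 x = x"
  unfolding tr_def by (simp add: tns_id0_r cmp_id_l cmp_id_r)

end


context PA begin

lemma slide1: "y \<in> Hom A k l \<Longrightarrow> z \<in> Hom A k' l' \<Longrightarrow> tns A y z = cmp A (tns A y (idn A l')) (tns A (idn A k) z)"
  using interchange[of "idn A k" k k y l z k' l' "idn A l'" l'] cmp_id_l[of z k' l'] cmp_id_r[of y k l] idn_hom by simp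
lemma slide2: "y \<in> Hom A k l \<Longrightarrow> z \<in> Hom A k' l' \<Longrightarrow> tns A y z = cmp A (tns A (idn A l) z) (tns A y (idn A k'))"
  using interchange[of y k l "idn A l" l "idn A k'" k' k' z l'] cmp_id_l[of y k l] cmp_id_r[of z k' l'] idn_hom by simp

lemma id_id: "cmp A (idn A n) (idn A n) = idn A n" using cmp_id_l[OF idn_hom] .

lemma lift_cmp: "x \<in> Hom A k l \<Longrightarrow> y \<in> Hom A l m \<Longrightarrow> lift A (cmp A y x) = cmp A (lift A y) (lift A x)"
  unfolding lift_def using interchange[of x k l y m "idn A 1" 1 1 "idn A 1" 1] id_id idn_hom by simp

lemma lift2: "x \<in> Hom A k l \<Longrightarrow> lift A (lift A x) = tns A x (idn A 2)"
  unfolding lift_def using tns_assoc[of x k l "idn A 1" 1 1 "idn A 1" 1 1] tns_idn[of 1 1] idn_hom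
  by (simp del: One_nat_def)

lemma lift_idn: "lift A (idn A n) = idn A (Suc n)"
  unfolding lift_def using tns_idn[of n 1] by simp

lemma lift_add: "x \<in> Hom A k l \<Longrightarrow> y \<in> Hom A k l \<Longrightarrow> lift A (x + y) = lift A x + lift A y"
  unfolding lift_def by (rule tns_add_l[OF _ _ idn_hom])
lemma lift_diff: "x \<in> Hom A k l \<Longrightarrow> y \<in> Hom A k l \<Longrightarrow> lift A (x - y) = lift A x - lift A y"
  unfolding lift_def by (rule tns_diff_l[OF _ _ idn_hom])
lemma lift_scl: "x \<in> Hom A k l \<Longrightarrow> lift A (scl A a x) = scl A a (lift A x)"
  unfolding lift_def by (rule tns_scl_l[OF _ idn_hom])

lemma capslide:
  assumes u: "u \<in> Hom A n n"
  shows "cmp A (tns A (idn A n) (capm A)) (tns A u (idn A 2)) = cmp A u (tns A (idn A n) (capm A))"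
proof -
  have "tns A u (capm A) = cmp A (tns A (idn A n) (capm A)) (tns A u (idn A 2))"
    by (rule slide2[OF u cap_hom])
  moreover have "tns A u (capm A) = cmp A (tns A u (idn A 0)) (tns A (idn A n) (capm A))"
    by (rule slide1[OF u cap_hom])
  ultimately show ?thesis using tns_id0_r[OF u] by simp
qed

lemma cupslide:
  assumes u: "u \<in> Hom A n n"
  shows "cmp A (tns A u (idn A 2)) (tns A (idn A n) (cupm A)) = cmp A (tns A (idn A n) (cupm A)) u"
proof -
  have "tns A u (cupm A) = cmp A (tns A u (idn A 2)) (tns A (idn A n) (cupm A))"
    by (rule slide1[OF u cup_hom])
  moreover have "tns A u (cupm A) = cmp A (tns A (idn A n) (cupm A)) (tns A u (idn A 0))"
    by (rule slide2[OF u cup_hom])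
  ultimately show ?thesis using tns_id0_r[OF u] by simp
qed

lemma capcup:
  assumes loop: "cmp A (capm A) (cupm A) = scl A 2 (idn A 0)"
  shows "cmp A (tns A (idn A n) (capm A)) (tns A (idn A n) (cupm A)) = scl A 2 (idn A n)"
proof -
  have "cmp A (tns A (idn A n) (capm A)) (tns A (idn A n) (cupm A)) = tns A (cmp A (idn A n) (idn A n)) (cmp A (capm A) (cupm A))"
    by (rule interchange[OF idn_hom idn_hom cup_hom cap_hom, symmetric])
  also have "\<dots> = tns A (idn A n) (scl A 2 (idn A 0))" by (simp only: id_id loop)
  also have "\<dots> = scl A 2 (idn A n)" by (simp only: tns_scl_r[OF idn_hom idn_hom] tns_idn add_0_right)
  finally show ?thesis .
qed

end


context PA begin

lemma ptr_lift:
  assumes loop: "cmp A (capm A) (cupm A) = scl A 2 (idn A 0)" and y: "y \<in> Hom A n n"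
  shows "ptr A n (lift A y) = scl A 2 y"
proof -
  define CAP where "CAP = tns A (idn A n) (capm A)"
  define CUP where "CUP = tns A (idn A n) (cupm A)"
  have hCAP: "CAP \<in> Hom A (n+2) n" unfolding CAP_def by (rule tyR | simp)+
  have hCUP: "CUP \<in> Hom A n (n+2)" unfolding CUP_def by (rule tyR | simp)+
  have hY2: "tns A y (idn A 2) \<in> Hom A (n+2) (n+2)" by (rule tyR y | simp)+
  have "ptr A n (lift A y) = cmp A CAP (cmp A (tns A y (idn A 2)) CUP)"
    unfolding ptr_def CAP_def CUP_def using lift2[OF y] by (simp add: lift_def)
  also have "\<dots> = cmp A CAP (cmp A CUP y)" unfolding CAP_def CUP_def using cupslide[OF y] by simp
  also have "\<dots> = cmp A (cmp A CAP CUP) y" by (rule cmp_assoc[OF y hCUP hCAP])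
  also have "\<dots> = cmp A (scl A 2 (idn A n)) y" unfolding CAP_def CUP_def using capcup[OF loop] by simp
  also have "\<dots> = scl A 2 y" using cmp_scl_l[OF y idn_hom] cmp_id_l[OF y] by simp
  finally show ?thesis .
qed

lemma ptr_nat:
  assumes u: "u \<in> Hom A n n" and v: "v \<in> Hom A n n" and x: "x \<in> Hom A (Suc n) (Suc n)"
  shows "ptr A n (cmp A (cmp A (lift A u) x) (lift A v)) = cmp A (cmp A u (ptr A n x)) v"
proof -
  define CAP where "CAP = tns A (idn A n) (capm A)"
  define CUP where "CUP = tns A (idn A n) (cupm A)"
  define U2 where "U2 = tns A u (idn A 2)"
  define V2 where "V2 = tns A v (idn A 2)"
  define X1 where "X1 = lift A x"
  have hCAP: "CAP \<in> Hom A (n+2) n" unfolding CAP_def by (rule tyR | simp)+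
  have hCUP: "CUP \<in> Hom A n (n+2)" unfolding CUP_def by (rule tyR | simp)+
  have hU2: "U2 \<in> Hom A (n+2) (n+2)" unfolding U2_def by (rule tyR u | simp)+
  have hV2: "V2 \<in> Hom A (n+2) (n+2)" unfolding V2_def by (rule tyR v | simp)+
  have hX1: "X1 \<in> Hom A (n+2) (n+2)" unfolding X1_def by (rule tyR2 x | simp)+
  have hlu: "lift A u \<in> Hom A (Suc n) (Suc n)" by (rule tyR2 u | simp)+
  have hlv: "lift A v \<in> Hom A (Suc n) (Suc n)" by (rule tyR2 v | simp)+
  have hux: "cmp A (lift A u) x \<in> Hom A (Suc n) (Suc n)" by (rule tyR2 u x hlu | simp)+
  have e0: "lift A (cmp A (cmp A (lift A u) x) (lift A v)) = cmp A (cmp A U2 X1) V2"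
    unfolding U2_def V2_def X1_def
    using lift_cmp[OF hlv hux] lift_cmp[OF x hlu] lift2[OF u] lift2[OF v] by simp
  have cs: "cmp A CAP U2 = cmp A u CAP" unfolding CAP_def U2_def by (rule capslide[OF u])
  have cu: "cmp A V2 CUP = cmp A CUP v" unfolding CUP_def V2_def by (rule cupslide[OF v])
  have hXC: "cmp A X1 CUP \<in> Hom A n (n+2)" by (rule cmp_hom[OF hCUP hX1])
  have hCv: "cmp A CUP v \<in> Hom A n (n+2)" by (rule cmp_hom[OF v hCUP])
  have hUX: "cmp A U2 X1 \<in> Hom A (n+2) (n+2)" by (rule cmp_hom[OF hX1 hU2])
  have hXCv: "cmp A X1 (cmp A CUP v) \<in> Hom A n (n+2)" by (rule cmp_hom[OF hCv hX1])
  have "ptr A n (cmp A (cmp A (lift A u) x) (lift A v)) = cmp A CAP (cmp A (cmp A (cmp A U2 X1) V2) CUP)"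
    unfolding ptr_def CAP_def CUP_def using e0 by (simp add: lift_def)
  also have "\<dots> = cmp A CAP (cmp A (cmp A U2 X1) (cmp A V2 CUP))"
    using cmp_assoc[OF hCUP hV2 hUX] by simp
  also have "\<dots> = cmp A CAP (cmp A (cmp A U2 X1) (cmp A CUP v))" by (simp only: cu)
  also have "\<dots> = cmp A CAP (cmp A U2 (cmp A X1 (cmp A CUP v)))"
    using cmp_assoc[OF hCv hX1 hU2] by simp
  also have "\<dots> = cmp A (cmp A CAP U2) (cmp A X1 (cmp A CUP v))"
    by (rule cmp_assoc[OF hXCv hU2 hCAP])
  also have "\<dots> = cmp A (cmp A u CAP) (cmp A X1 (cmp A CUP v))" by (simp only: cs)
  also have "\<dots> = cmp A u (cmp A CAP (cmp A X1 (cmp A CUP v)))"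
    by (rule cmp_assoc[OF hXCv hCAP u, symmetric])
  also have "cmp A X1 (cmp A CUP v) = cmp A (cmp A X1 CUP) v"
    by (rule cmp_assoc[OF v hCUP hX1])
  also have "cmp A CAP (cmp A (cmp A X1 CUP) v) = cmp A (cmp A CAP (cmp A X1 CUP)) v"
    by (rule cmp_assoc[OF v hXC hCAP])
  also have "cmp A CAP (cmp A X1 CUP) = ptr A n x"
    unfolding ptr_def CAP_def X1_def CUP_def lift_def ..
  also have "cmp A u (cmp A (ptr A n x) v) = cmp A (cmp A u (ptr A n x)) v"
    by (rule cmp_assoc[OF v _ u]) (rule tyR2 x | simp)+
  finally show ?thesis .
qed

end


context PA begin

lemma cmp_nn: "x \<in> Hom A n n \<Longrightarrow> y \<in> Hom A n n \<Longrightarrow> cmp A x y \<in> Hom A n n" using cmp_hom by blast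
lemma add_nn: "x \<in> Hom A n n \<Longrightarrow> y \<in> Hom A n n \<Longrightarrow> x + y \<in> Hom A n n" using hom_add by blast
lemma diff_nn: "x \<in> Hom A n n \<Longrightarrow> y \<in> Hom A n n \<Longrightarrow> x - y \<in> Hom A n n" using hom_diff by blast
lemma scl_nn: "x \<in> Hom A n n \<Longrightarrow> scl A a x \<in> Hom A n n" using hom_scl by blast
lemma assoc_nn: "f \<in> Hom A n n \<Longrightarrow> g \<in> Hom A n n \<Longrightarrow> h \<in> Hom A n n \<Longrightarrow> cmp A h (cmp A g f) = cmp A (cmp A h g) f"
  using cmp_assoc by blast
lemma addl_nn: "f \<in> Hom A n n \<Longrightarrow> g \<in> Hom A n n \<Longrightarrow> g' \<in> Hom A n n \<Longrightarrow> cmp A (g + g') f = cmp A g f + cmp A g' f"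
  using cmp_add_l by blast
lemma addr_nn: "f \<in> Hom A n n \<Longrightarrow> f' \<in> Hom A n n \<Longrightarrow> g \<in> Hom A n n \<Longrightarrow> cmp A g (f + f') = cmp A g f + cmp A g f'"
  using cmp_add_r by blast
lemma diffl_nn: "f \<in> Hom A n n \<Longrightarrow> g \<in> Hom A n n \<Longrightarrow> g' \<in> Hom A n n \<Longrightarrow> cmp A (g - g') f = cmp A g f - cmp A g' f"
  using cmp_diff_l by blast
lemma diffr_nn: "f \<in> Hom A n n \<Longrightarrow> f' \<in> Hom A n n \<Longrightarrow> g \<in> Hom A n n \<Longrightarrow> cmp A g (f - f') = cmp A g f - cmp A g f'"
  using cmp_diff_r by blast
lemma scll_nn: "f \<in> Hom A n n \<Longrightarrow> g \<in> Hom A n n \<Longrightarrow> cmp A (scl A a g) f = scl A a (cmp A g f)"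
  using cmp_scl_l by blast
lemma sclr_nn: "f \<in> Hom A n n \<Longrightarrow> g \<in> Hom A n n \<Longrightarrow> cmp A g (scl A a f) = scl A a (cmp A g f)"
  using cmp_scl_r by blast

lemmas nnR = cmp_nn add_nn diff_nn scl_nn assoc_nn addl_nn addr_nn diffl_nn diffr_nn scll_nn sclr_nn
lemmas linS = scl_add_r scl_diff_r scl_scl

lemma jwstep:
  assumes a: "a \<in> Hom A N N" and e: "e \<in> Hom A N N" and t: "t \<in> Hom A N N"
    and aa: "cmp A a a = a" and eae: "cmp A (cmp A e a) e = scl A r (cmp A t e)"
    and at: "cmp A a t = a" and cr: "c * r = 1"
  defines "p \<equiv> a - scl A c (cmp A (cmp A a e) a)"
  shows "cmp A p p = p" and "cmp A p a = p" and "cmp A a p = p" and "p \<in> Hom A N N"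
proof -
  have aa': "\<And>x. x \<in> Hom A N N \<Longrightarrow> cmp A (cmp A x a) a = cmp A x a"
    using a aa by (simp add: assoc_nn[where n=N, symmetric] cmp_nn[where n=N])
  have eae': "\<And>x. x \<in> Hom A N N \<Longrightarrow> cmp A (cmp A (cmp A x e) a) e = scl A r (cmp A (cmp A x t) e)"
  proof -
    fix x assume x: "x \<in> Hom A N N"
    have "cmp A (cmp A (cmp A x e) a) e = cmp A x (cmp A (cmp A e a) e)"
      using x a e by (simp add: nnR[where n=N])
    also have "\<dots> = scl A r (cmp A (cmp A x t) e)" unfolding eae using x t e by (simp add: nnR[where n=N] linS)
    finally show "cmp A (cmp A (cmp A x e) a) e = scl A r (cmp A (cmp A x t) e)" .
  qed
  define X where "X = cmp A (cmp A a e) a"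
  have hX: "X \<in> Hom A N N" unfolding X_def using a e by (simp add: nnR[where n=N])
  have aX: "cmp A a X = X" unfolding X_def using a e aa by (simp add: nnR[where n=N])
  have Xa: "cmp A X a = X" unfolding X_def using a e by (simp add: aa' nnR[where n=N])
  have XX: "cmp A X X = scl A r X" unfolding X_def using a e t
    by (simp add: nnR[where n=N] aa' eae' at)
  have pd: "p = a - scl A c X" unfolding p_def X_def ..
  show hp: "p \<in> Hom A N N" unfolding pd using a hX by (simp add: nnR[where n=N] linS)
  show "cmp A p a = p" unfolding pd using a hX aa Xa by (simp add: nnR[where n=N] linS)
  show "cmp A a p = p" unfolding pd using a hX aa aX by (simp add: nnR[where n=N] linS)
  have "cmp A p p = a - scl A c X - scl A c X + scl A (c * c * r) X"
    unfolding pd using a hX aa aX Xa XX by (simp add: nnR[where n=N] linS mult.assoc)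
  also have "\<dots> = p" unfolding pd using cr by (simp add: mult.assoc)
  finally show "cmp A p p = p" .
qed

end


context PA begin

lemma tid_cmp: "a \<in> Hom A k l \<Longrightarrow> b \<in> Hom A l p \<Longrightarrow> cmp A (tns A (idn A m) b) (tns A (idn A m) a) = tns A (idn A m) (cmp A b a)"
  using interchange[of "idn A m" m m "idn A m" m a k l b p] id_id idn_hom by simp

lemma EE_split: "EE A m = cmp A (tns A (idn A m) (cupm A)) (tns A (idn A m) (capm A))"
  unfolding EE_def by (rule tid_cmp[OF cap_hom cup_hom, symmetric])

lemma zz: "cmp A (tns A (idn A 1) (capm A)) (cmp A (tns A (cmp A (cupm A) (capm A)) (idn A 1)) (tns A (idn A 1) (cupm A))) = idn A 1"
proof -
  have h1: "tns A (idn A 1) (capm A) \<in> Hom A 3 1" by (rule tyR | simp)+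
  have h2: "tns A (cupm A) (idn A 1) \<in> Hom A 1 3" by (rule tyR | simp)+
  have h3: "tns A (capm A) (idn A 1) \<in> Hom A 3 1" by (rule tyR | simp)+
  have h4: "tns A (idn A 1) (cupm A) \<in> Hom A 1 3" by (rule tyR | simp)+
  have "tns A (cmp A (cupm A) (capm A)) (cmp A (idn A 1) (idn A 1)) = cmp A (tns A (cupm A) (idn A 1)) (tns A (capm A) (idn A 1))"
    by (rule interchange[OF cap_hom cup_hom idn_hom idn_hom])
  then have s: "tns A (cmp A (cupm A) (capm A)) (idn A 1) = cmp A (tns A (cupm A) (idn A 1)) (tns A (capm A) (idn A 1))"
    by (simp only: id_id)
  have "cmp A (tns A (idn A 1) (capm A)) (cmp A (cmp A (tns A (cupm A) (idn A 1)) (tns A (capm A) (idn A 1))) (tns A (idn A 1) (cupm A)))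
      = cmp A (tns A (idn A 1) (capm A)) (cmp A (tns A (cupm A) (idn A 1)) (cmp A (tns A (capm A) (idn A 1)) (tns A (idn A 1) (cupm A))))"
    using cmp_assoc[OF h4 h3 h2] by simp
  also have "\<dots> = cmp A (cmp A (tns A (idn A 1) (capm A)) (tns A (cupm A) (idn A 1))) (cmp A (tns A (capm A) (idn A 1)) (tns A (idn A 1) (cupm A)))"
    by (rule cmp_assoc[OF cmp_hom[OF h4 h3] h2 h1])
  also have "\<dots> = idn A 1" using zig1 zig2 id_id by simp
  finally show ?thesis unfolding s .
qed

lemma ptr_E: "ptr A (Suc m) (EE A m) = idn A (Suc m)"
proof -
  define CC where "CC = cmp A (cupm A) (capm A)"
  have hCC: "CC \<in> Hom A 2 2" unfolding CC_def by (rule tyR | simp)+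
  have i1: "idn A (Suc m) = tns A (idn A m) (idn A 1)" by (simp add: tns_idn)
  have c1: "tns A (idn A (Suc m)) (capm A) = tns A (idn A m) (tns A (idn A 1) (capm A))"
    unfolding i1 by (rule tns_assoc[OF idn_hom idn_hom cap_hom])
  have c2: "tns A (idn A (Suc m)) (cupm A) = tns A (idn A m) (tns A (idn A 1) (cupm A))"
    unfolding i1 by (rule tns_assoc[OF idn_hom idn_hom cup_hom])
  have c3: "tns A (EE A m) (idn A 1) = tns A (idn A m) (tns A CC (idn A 1))"
    unfolding EE_def CC_def[symmetric] by (rule tns_assoc[OF idn_hom hCC idn_hom])
  have h1: "tns A (idn A 1) (capm A) \<in> Hom A 3 1" by (rule tyR | simp)+
  have h4: "tns A (idn A 1) (cupm A) \<in> Hom A 1 3" by (rule tyR | simp)+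
  have h5: "tns A CC (idn A 1) \<in> Hom A 3 3" by (rule tyR hCC | simp)+
  have "ptr A (Suc m) (EE A m) = cmp A (tns A (idn A m) (tns A (idn A 1) (capm A)))
           (cmp A (tns A (idn A m) (tns A CC (idn A 1))) (tns A (idn A m) (tns A (idn A 1) (cupm A))))"
    unfolding ptr_def c1 c2 c3 ..
  also have "\<dots> = tns A (idn A m) (cmp A (tns A (idn A 1) (capm A)) (cmp A (tns A CC (idn A 1)) (tns A (idn A 1) (cupm A))))"
    by (simp only: tid_cmp[OF h4 h5] tid_cmp[OF cmp_hom[OF h4 h5] h1])
  also have "\<dots> = tns A (idn A m) (idn A 1)" unfolding CC_def zz ..
  finally show ?thesis using i1 by simp
qed

lemma E_sandwich:
  assumes x: "x \<in> Hom A (Suc m) (Suc m)"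
  shows "cmp A (cmp A (EE A m) (lift A x)) (EE A m) = cmp A (tns A (ptr A m x) (idn A 2)) (EE A m)"
proof -
  define CAP where "CAP = tns A (idn A m) (capm A)"
  define CUP where "CUP = tns A (idn A m) (cupm A)"
  define X1 where "X1 = lift A x"
  have hCAP: "CAP \<in> Hom A (m+2) m" unfolding CAP_def by (rule tyR | simp)+
  have hCUP: "CUP \<in> Hom A m (m+2)" unfolding CUP_def by (rule tyR | simp)+
  have hX1: "X1 \<in> Hom A (m+2) (m+2)" unfolding X1_def by (rule tyR2 x | simp)+
  have E: "EE A m = cmp A CUP CAP" unfolding CUP_def CAP_def by (rule EE_split)
  have hp: "ptr A m x \<in> Hom A m m" by (rule tyR2 x | simp)+
  have p: "ptr A m x = cmp A CAP (cmp A X1 CUP)" unfolding ptr_def CAP_def CUP_def X1_def lift_def ..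
  have hXC: "cmp A X1 CUP \<in> Hom A m (m+2)" by (rule cmp_hom[OF hCUP hX1])
  have hP2: "tns A (ptr A m x) (idn A 2) \<in> Hom A (m+2) (m+2)" by (rule tyR hp | simp)+
  have hCX: "cmp A CAP X1 \<in> Hom A (m+2) m" by (rule cmp_hom[OF hX1 hCAP])
  have hCXC: "cmp A (cmp A CAP X1) CUP \<in> Hom A m m" by (rule cmp_hom[OF hCUP hCX])
  have s1: "cmp A (cmp A CUP CAP) X1 = cmp A CUP (cmp A CAP X1)"
    by (rule cmp_assoc[OF hX1 hCAP hCUP, symmetric])
  have s2: "cmp A (cmp A CUP (cmp A CAP X1)) (cmp A CUP CAP) = cmp A (cmp A (cmp A CUP (cmp A CAP X1)) CUP) CAP"
    by (rule cmp_assoc[OF hCAP hCUP]) (rule tyR hCUP hCAP hX1 hCX | simp)+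
  have s3: "cmp A (cmp A CUP (cmp A CAP X1)) CUP = cmp A CUP (cmp A (cmp A CAP X1) CUP)"
    by (rule cmp_assoc[OF hCUP hCX hCUP, symmetric])
  have s4: "cmp A (cmp A CAP X1) CUP = ptr A m x" unfolding p by (rule cmp_assoc[OF hCUP hX1 hCAP, symmetric])
  have s5: "cmp A CUP (ptr A m x) = cmp A (tns A (ptr A m x) (idn A 2)) CUP"
    unfolding CUP_def by (rule cupslide[OF hp, symmetric])
  have s6: "cmp A (cmp A (tns A (ptr A m x) (idn A 2)) CUP) CAP = cmp A (tns A (ptr A m x) (idn A 2)) (cmp A CUP CAP)"
    by (rule cmp_assoc[OF hCAP hCUP hP2, symmetric])
  have "cmp A (cmp A (cmp A CUP CAP) X1) (cmp A CUP CAP) = cmp A (tns A (ptr A m x) (idn A 2)) (cmp A CUP CAP)"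
    unfolding s1 s2 s3 s4 s5 s6 ..
  then show ?thesis unfolding E X1_def .
qed

lemma ptr_add: "x \<in> Hom A (Suc n) (Suc n) \<Longrightarrow> y \<in> Hom A (Suc n) (Suc n) \<Longrightarrow> ptr A n (x + y) = ptr A n x + ptr A n y"
proof -
  assume x: "x \<in> Hom A (Suc n) (Suc n)" and y: "y \<in> Hom A (Suc n) (Suc n)"
  have hCAP: "tns A (idn A n) (capm A) \<in> Hom A (n+2) n" by (rule tyR | simp)+
  have hCUP: "tns A (idn A n) (cupm A) \<in> Hom A n (n+2)" by (rule tyR | simp)+
  have hx: "tns A x (idn A 1) \<in> Hom A (n+2) (n+2)" by (rule tyR x | simp)+
  have hy: "tns A y (idn A 1) \<in> Hom A (n+2) (n+2)" by (rule tyR y | simp)+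
  show ?thesis unfolding ptr_def
    by (simp only: tns_add_l[OF x y idn_hom] cmp_add_l[OF hCUP hx hy] cmp_add_r[OF cmp_hom[OF hCUP hx] cmp_hom[OF hCUP hy] hCAP])
qed

lemma ptr_scl: "x \<in> Hom A (Suc n) (Suc n) \<Longrightarrow> ptr A n (scl A a x) = scl A a (ptr A n x)"
proof -
  assume x: "x \<in> Hom A (Suc n) (Suc n)"
  have hCAP: "tns A (idn A n) (capm A) \<in> Hom A (n+2) n" by (rule tyR | simp)+
  have hCUP: "tns A (idn A n) (cupm A) \<in> Hom A n (n+2)" by (rule tyR | simp)+
  have hx: "tns A x (idn A 1) \<in> Hom A (n+2) (n+2)" by (rule tyR x | simp)+
  show ?thesis unfolding ptr_def
    by (simp only: tns_scl_l[OF x idn_hom] cmp_scl_l[OF hCUP hx] cmp_scl_r[OF cmp_hom[OF hCUP hx] hCAP])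
qed

lemma ptr_diff: "x \<in> Hom A (Suc n) (Suc n) \<Longrightarrow> y \<in> Hom A (Suc n) (Suc n) \<Longrightarrow> ptr A n (x - y) = ptr A n x - ptr A n y"
  unfolding minus_scl by (simp add: ptr_add ptr_scl hom_scl)

lemma tr_scl: "x \<in> Hom A n n \<Longrightarrow> tr A n (scl A a x) = scl A a (tr A n x)"
proof -
  assume x: "x \<in> Hom A n n"
  have hx: "tns A x (idn A n) \<in> Hom A (n+n) (n+n)" by (rule tyR x | simp)+
  show ?thesis unfolding tr_def
    by (simp only: tns_scl_l[OF x idn_hom] cmp_scl_l[OF coev_hom hx] cmp_scl_r[OF cmp_hom[OF coev_hom hx] ev_hom])
qed

end


context PA begin

lemma TLe_EE: "TLe A (Suc (Suc k)) (Suc k) = EE A k"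
proof -
  have "EE A k \<in> Hom A (k+2) (k+2)" by (rule EE_hom) simp_all
  then show ?thesis unfolding TLe_def EE_def by (simp add: tns_id0_r)
qed

lemma jw_hom: "jw A k \<in> Hom A k k"
proof (induction k rule: less_induct)
  case (less k)
  show ?case
  proof (cases k)
    case 0 then show ?thesis by (simp add: idn_hom)
  next
    case (Suc j)
    show ?thesis
    proof (cases j)
      case 0 then show ?thesis using Suc by (simp add: idn_hom)
    next
      case (Suc i)
      have h: "jw A (Suc i) \<in> Hom A (Suc i) (Suc i)" using less \<open>k = Suc j\<close> Suc by simp
      have ha: "tns A (jw A (Suc i)) (idn A 1) \<in> Hom A (Suc (Suc i)) (Suc (Suc i))" by (rule tyR h | simp)+
      have he: "TLe A (Suc (Suc i)) (Suc i) \<in> Hom A (Suc (Suc i)) (Suc (Suc i))" unfolding TLe_EE by (rule EE_hom) simp_all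
      show ?thesis using \<open>k = Suc j\<close> Suc ha he by (simp add: Let_def nnR)
    qed
  qed
qed

lemma jw_main:
  assumes loop: "cmp A (capm A) (cupm A) = scl A 2 (idn A 0)"
  shows "cmp A (jw A (Suc j)) (jw A (Suc j)) = jw A (Suc j) \<and> cmp A (jw A (Suc j)) (lift A (jw A j)) = jw A (Suc j)
     \<and> ptr A j (jw A (Suc j)) = scl A (of_nat (j+2) / of_nat (j+1)) (jw A j)"
proof (induction j)
  case 0
  have l0: "lift A (idn A 0) = idn A 1" using lift_idn[of 0] by simp
  have "ptr A 0 (idn A 1) = scl A 2 (idn A 0)" using ptr_lift[OF loop idn_hom[of 0]] l0 by simp
  then show ?case using l0 id_id[of 1] by simp
next
  case (Suc j)
  define u where "u = jw A (Suc j)"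
  define a where "a = lift A u"
  define e where "e = EE A j"
  define t where "t = tns A (jw A j) (idn A 2)"
  define r :: complex where "r = of_nat (j+2) / of_nat (j+1)"
  define c :: complex where "c = of_nat (Suc j) / of_nat (Suc (Suc j))"
  have hu: "u \<in> Hom A (Suc j) (Suc j)" unfolding u_def by (rule jw_hom)
  have hj: "jw A j \<in> Hom A j j" by (rule jw_hom)
  have ha: "a \<in> Hom A (Suc (Suc j)) (Suc (Suc j))" unfolding a_def by (rule tyR2 hu | simp)+
  have he: "e \<in> Hom A (Suc (Suc j)) (Suc (Suc j))" unfolding e_def by (rule EE_hom) simp_all
  have ht: "t \<in> Hom A (Suc (Suc j)) (Suc (Suc j))" unfolding t_def by (rule tyR hj | simp)+
  have uu: "cmp A u u = u" and ul: "cmp A u (lift A (jw A j)) = u" and pu: "ptr A j u = scl A r (jw A j)"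
    using Suc.IH unfolding u_def r_def by auto
  have aa: "cmp A a a = a" unfolding a_def using lift_cmp[OF hu hu] uu by simp
  have eae: "cmp A (cmp A e a) e = scl A r (cmp A t e)"
  proof -
    have "cmp A (cmp A e a) e = cmp A (tns A (ptr A j u) (idn A 2)) e"
      unfolding e_def a_def by (rule E_sandwich[OF hu])
    also have "\<dots> = cmp A (scl A r t) e" unfolding pu t_def using tns_scl_l[OF hj idn_hom] by simp
    also have "\<dots> = scl A r (cmp A t e)" by (rule cmp_scl_l[OF he ht])
    finally show ?thesis .
  qed
  have hlj: "lift A (jw A j) \<in> Hom A (Suc j) (Suc j)" by (rule tyR2 hj | simp)+
  have at: "cmp A a t = a"
  proof -
    have "t = lift A (lift A (jw A j))" unfolding t_def by (rule lift2[OF hj, symmetric])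
    then show ?thesis unfolding a_def using lift_cmp[OF hlj hu] ul by simp
  qed
  have cr: "c * r = 1"
  proof -
    have d1: "(of_nat (Suc j)::complex) \<noteq> 0" "(of_nat (Suc (Suc j))::complex) \<noteq> 0"
      by (simp only: of_nat_eq_0_iff; simp)+
    have "c * r = of_nat (Suc j) / of_nat (Suc (Suc j)) * (of_nat (Suc (Suc j)) / of_nat (Suc j))"
      unfolding c_def r_def by simp
    also have "\<dots> = 1" using d1 by (simp del: of_nat_Suc)
    finally show ?thesis .
  qed
  have jwd: "jw A (Suc (Suc j)) = a - scl A c (cmp A (cmp A a e) a)"
    unfolding a_def u_def e_def c_def by (simp add: Let_def TLe_EE lift_def del: of_nat_Suc)
  note J = jwstep[OF ha he ht aa eae at cr]
  have p1: "cmp A (jw A (Suc (Suc j))) (jw A (Suc (Suc j))) = jw A (Suc (Suc j))" unfolding jwd by (rule J(1))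
  have p2: "cmp A (jw A (Suc (Suc j))) (lift A (jw A (Suc j))) = jw A (Suc (Suc j))" unfolding jwd a_def[symmetric] u_def[symmetric] by (rule J(2))
  have hae: "cmp A (cmp A a e) a \<in> Hom A (Suc (Suc j)) (Suc (Suc j))" using ha he by (simp add: nnR)
  have "ptr A (Suc j) (jw A (Suc (Suc j))) = ptr A (Suc j) a - scl A c (ptr A (Suc j) (cmp A (cmp A a e) a))"
    unfolding jwd using ha hae by (simp add: ptr_diff ptr_scl hom_scl)
  also have "ptr A (Suc j) a = scl A 2 u" unfolding a_def by (rule ptr_lift[OF loop hu])
  also have "ptr A (Suc j) (cmp A (cmp A a e) a) = cmp A (cmp A u (ptr A (Suc j) e)) u"
    unfolding a_def by (rule ptr_nat[OF hu hu he])
  also have "\<dots> = u" unfolding e_def ptr_E using cmp_id_r[OF hu] uu by simp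
  also have "scl A 2 u - scl A c u = scl A (of_nat (Suc j + 2) / of_nat (Suc j + 1)) u"
  proof -
    have e2: "(of_nat j + 2::complex) = of_nat (j+2)" by simp
    have nz: "(of_nat j + 2::complex) \<noteq> 0" unfolding e2 by (simp only: of_nat_eq_0_iff; simp)
    have "(2::complex) - c = of_nat (Suc j + 2) / of_nat (Suc j + 1)" unfolding c_def using nz by (simp add: field_simps)
    then show ?thesis by (simp add: scl_diff_l[symmetric])
  qed
  finally show ?case using p1 p2 unfolding u_def by simp
qed

end


context PA begin

lemma jw_rec: "jw A (Suc (Suc k)) = lift A (jw A (Suc k)) - scl A (of_nat (Suc k) / of_nat (Suc (Suc k)))
   (cmp A (cmp A (lift A (jw A (Suc k))) (EE A k)) (lift A (jw A (Suc k))))"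
  by (simp add: Let_def TLe_EE lift_def del: of_nat_Suc)

lemma lift_rec: "a \<in> Hom A N N \<Longrightarrow> e \<in> Hom A N N \<Longrightarrow>
  lift A (a - scl A c (cmp A (cmp A a e) a)) = lift A a - scl A c (cmp A (cmp A (lift A a) (lift A e)) (lift A a))"
proof -
  assume a: "a \<in> Hom A N N" and e: "e \<in> Hom A N N"
  have ae: "cmp A a e \<in> Hom A N N" using e a by (rule cmp_hom)
  have aea: "cmp A (cmp A a e) a \<in> Hom A N N" using a ae by (rule cmp_hom)
  show ?thesis
    by (simp only: lift_diff[OF a hom_scl[OF aea]] lift_scl[OF aea] lift_cmp[OF a ae] lift_cmp[OF e a])
qed

lemma absorb:
  assumes S: "S \<in> Hom A N N" and a: "a \<in> Hom A N N" and e: "e \<in> Hom A N N"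
   and Sa: "cmp A S a = S" and aS: "cmp A a S = S" and Se: "cmp A S e = 0" and eS: "cmp A e S = 0"
  shows "cmp A S (a - scl A c (cmp A (cmp A a e) a)) = S" "cmp A (a - scl A c (cmp A (cmp A a e) a)) S = S"
proof -
  have "cmp A S (cmp A (cmp A a e) a) = cmp A (cmp A (cmp A S a) e) a" using S a e by (simp add: nnR[where n=N])
  also have "\<dots> = 0" unfolding Sa Se using a by (rule cmp_zero_l)
  finally have z1: "cmp A S (cmp A (cmp A a e) a) = 0" .
  have "cmp A (cmp A (cmp A a e) a) S = cmp A a (cmp A e (cmp A a S))" using S a e by (simp add: nnR[where n=N])
  also have "\<dots> = 0" unfolding aS eS using a by (rule cmp_zero_r)
  finally have z2: "cmp A (cmp A (cmp A a e) a) S = 0" .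
  show "cmp A S (a - scl A c (cmp A (cmp A a e) a)) = S" using S a e Sa z1 by (simp add: nnR[where n=N] scl_zero_r)
  show "cmp A (a - scl A c (cmp A (cmp A a e) a)) S = S" using S a e aS z2 by (simp add: nnR[where n=N] scl_zero_r)
qed

end


theorem lemma4p7:
  fixes A :: "('m::ab_group_add) pa" and S :: 'm
  assumes "is_planar_algebra A"
    and "generator_rels A S"
  shows "tr A 0 (idn A 0) = idn A 0
       \<and> tr A 1 (idn A 1) = scl A 2 (idn A 0)
       \<and> tr A 2 (jw A 2) = scl A 3 (idn A 0)
       \<and> tr A 3 (jw A 3) = scl A 4 (idn A 0)
       \<and> tr A 4 (P4 A S) = scl A 3 (idn A 0)
       \<and> tr A 5 (P5 A S) = scl A 2 (idn A 0)
       \<and> tr A 6 (P6 A S) = idn A 0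
       \<and> tr A 4 (Q4 A S) = scl A 2 (idn A 0)"
proof -
  interpret PA A using assms(1) by (simp add: PA_def)
  have G: "generator_rels A S" by (rule assms(2))
  have hS: "S \<in> Hom A 4 4" using G unfolding generator_rels_def by blast
  have loop: "cmp A (capm A) (cupm A) = scl A 2 (idn A 0)" using G unfolding generator_rels_def by blast
  have TL: "\<forall>j\<in>{1,2,3}. cmp A (TLe A 4 j) S = 0 \<and> cmp A S (TLe A 4 j) = 0" using G unfolding generator_rels_def by blast
  have pS: "ptr A 3 S = 0" using G unfolding generator_rels_def ptr_def by blast
  have SS: "cmp A S S = scl A 6 (jw A 4) + S" using G unfolding generator_rels_def by blast
  have T1: "TLe A 4 1 = lift A (lift A (EE A 0))"
  proof -
    have "EE A 0 \<in> Hom A 2 2" by (rule EE_hom) simp_all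
    then show ?thesis unfolding TLe_def using lift2[of "EE A 0" 2 2] by (simp add: EE_def numeral_2_eq_2 numeral_3_eq_3)
  qed
  have T2: "TLe A 4 2 = lift A (EE A 1)" unfolding TLe_def lift_def EE_def by simp
  have T3: "TLe A 4 3 = EE A 2"
  proof -
    have "EE A 2 \<in> Hom A 4 4" by (rule EE_hom) simp_all
    then show ?thesis unfolding TLe_def using tns_id0_r[of "EE A 2" 4 4] by (simp add: EE_def)
  qed
  have TL1: "cmp A (TLe A 4 1) S = 0" "cmp A S (TLe A 4 1) = 0" using TL by auto
  have TL2: "cmp A (TLe A 4 2) S = 0" "cmp A S (TLe A 4 2) = 0" using TL by auto
  have TL3: "cmp A (TLe A 4 3) S = 0" "cmp A S (TLe A 4 3) = 0" using TL by auto
  have jr2: "jw A 2 = lift A (jw A 1) - scl A (1/2) (cmp A (cmp A (lift A (jw A 1)) (EE A 0)) (lift A (jw A 1)))"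
    using jw_rec[of 0] by (simp add: numeral_eq_Suc del: jw.simps)
  have jr3: "jw A 3 = lift A (jw A 2) - scl A (2/3) (cmp A (cmp A (lift A (jw A 2)) (EE A 1)) (lift A (jw A 2)))"
    using jw_rec[of 1] by (simp add: numeral_eq_Suc del: jw.simps)
  have jr4: "jw A 4 = lift A (jw A 3) - scl A (3/4) (cmp A (cmp A (lift A (jw A 3)) (EE A 2)) (lift A (jw A 3)))"
    using jw_rec[of 2] by (simp add: numeral_eq_Suc del: jw.simps)
  have j1: "jw A 1 = idn A 1" by simp
  have hj1: "jw A 1 \<in> Hom A 1 1" and hj2: "jw A 2 \<in> Hom A 2 2" and hj3: "jw A 3 \<in> Hom A 3 3"
    and hj4: "jw A 4 \<in> Hom A 4 4" by (rule jw_hom)+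
  have he0: "EE A 0 \<in> Hom A 2 2" and he1: "EE A 1 \<in> Hom A 3 3" and he2: "EE A 2 \<in> Hom A 4 4"
    by (rule EE_hom; simp)+
  have ha1: "lift A (jw A 1) \<in> Hom A 2 2" by (rule tyR2 hj1 | simp)+
  have ha2: "lift A (jw A 2) \<in> Hom A 3 3" by (rule tyR2 hj2 | simp)+
  have ha3: "lift A (jw A 3) \<in> Hom A 4 4" by (rule tyR2 hj3 | simp)+
  have hla1: "lift A (lift A (jw A 1)) \<in> Hom A 3 3" by (rule tyR2 ha1 | simp)+
  have hle0: "lift A (EE A 0) \<in> Hom A 3 3" by (rule tyR2 he0 | simp)+
  have hA2: "lift A (lift A (jw A 2)) \<in> Hom A 4 4" by (rule tyR2 ha2 | simp)+
  have id4: "lift A (lift A (lift A (jw A 1))) = idn A 4"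
    unfolding j1 using lift_idn[of 1] lift_idn[of 2] lift_idn[of 3] by (simp add: numeral_eq_Suc)
  have hid4: "idn A 4 \<in> Hom A 4 4" by (rule idn_hom)
  have hT1: "TLe A 4 1 \<in> Hom A 4 4" unfolding T1 by (rule tyR2 hle0 | simp)+
  have hT2: "TLe A 4 2 \<in> Hom A 4 4" unfolding T2 by (rule tyR2 he1 | simp)+
  have hT3: "TLe A 4 3 \<in> Hom A 4 4" unfolding T3 by (rule he2)
  have L2: "lift A (lift A (jw A 2)) = idn A 4 - scl A (1/2) (cmp A (cmp A (idn A 4) (TLe A 4 1)) (idn A 4))"
    unfolding jr2 lift_rec[OF ha1 he0] lift_rec[OF hla1 hle0] id4 T1 ..
  have SA2: "cmp A S (lift A (lift A (jw A 2))) = S" and A2S: "cmp A (lift A (lift A (jw A 2))) S = S"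
    unfolding L2 by (rule absorb[OF hS hid4 hT1 cmp_id_r[OF hS] cmp_id_l[OF hS] TL1(2) TL1(1)])+
  have L3: "lift A (jw A 3) = lift A (lift A (jw A 2)) - scl A (2/3) (cmp A (cmp A (lift A (lift A (jw A 2))) (TLe A 4 2)) (lift A (lift A (jw A 2))))"
    unfolding jr3 lift_rec[OF ha2 he1] T2 ..
  have SA3: "cmp A S (lift A (jw A 3)) = S" and A3S: "cmp A (lift A (jw A 3)) S = S"
    unfolding L3 by (rule absorb[OF hS hA2 hT2 SA2 A2S TL2(2) TL2(1)])+
  have SA4: "cmp A S (jw A 4) = S" and A4S: "cmp A (jw A 4) S = S"
    unfolding jr4 T3[symmetric] by (rule absorb[OF hS ha3 hT3 SA3 A3S TL3(2) TL3(1)])+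
  have pj1: "ptr A 0 (idn A 1) = scl A 2 (idn A 0)"
    using jw_main[OF loop, of 0] by simp
  have pj2: "ptr A 1 (jw A 2) = scl A (3/2) (jw A 1)"
    using jw_main[OF loop, of 1] by (simp add: numeral_eq_Suc del: jw.simps)
  have pj3: "ptr A 2 (jw A 3) = scl A (4/3) (jw A 2)"
    using jw_main[OF loop, of 2] by (simp add: numeral_eq_Suc del: jw.simps)
  have pj4: "ptr A 3 (jw A 4) = scl A (5/4) (jw A 3)" and jj4: "cmp A (jw A 4) (jw A 4) = jw A 4"
    and j4l: "cmp A (jw A 4) (lift A (jw A 3)) = jw A 4"
    using jw_main[OF loop, of 3] by (simp_all add: numeral_eq_Suc del: jw.simps)
  have hP4: "P4 A S \<in> Hom A 4 4" unfolding P4_def using hj4 hS by (simp add: nnR)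
  have c1: "scl A (3/5) (jw A 4) = scl A (9/25) (jw A 4) + scl A (6/25) (jw A 4)" by (simp add: scl_add_l[symmetric])
  have c2: "scl A (1/5) S = scl A (3/25) S + scl A (3/25) S - scl A (1/25) S" by (simp add: scl_add_l[symmetric] scl_diff_l[symmetric])
  have P4P4: "cmp A (P4 A S) (P4 A S) = P4 A S"
    unfolding P4_def using hj4 hS SA4 A4S SS jj4
    apply (simp add: nnR[where n=4] linS)
    apply (subst c1, subst c2)
    apply (simp add: algebra_simps)
    done
  have pP4: "ptr A 3 (P4 A S) = scl A (3/4) (jw A 3)"
  proof -
    have "ptr A 3 (P4 A S) = scl A (3/5) (ptr A 3 (jw A 4)) - scl A (1/5) (ptr A 3 S)"
      unfolding P4_def using hj4 hS by (simp add: ptr_diff ptr_scl hom_scl numeral_eq_Suc)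
    then show ?thesis unfolding pj4 pS by (simp add: scl_scl scl_zero_r)
  qed
  have pQ4: "ptr A 3 (Q4 A S) = scl A (1/2) (jw A 3)"
  proof -
    have "ptr A 3 (Q4 A S) = scl A (2/5) (ptr A 3 (jw A 4)) + scl A (1/5) (ptr A 3 S)"
      unfolding Q4_def using hj4 hS by (simp add: ptr_add ptr_scl hom_scl numeral_eq_Suc)
    then show ?thesis unfolding pj4 pS by (simp add: scl_scl scl_zero_r)
  qed
  have hl3: "lift A (jw A 3) \<in> Hom A 4 4" by (rule ha3)
  have P4l: "cmp A (P4 A S) (lift A (jw A 3)) = P4 A S"
    unfolding P4_def using hj4 hS hl3 j4l SA3 by (simp add: nnR[where n=4])
  define a where "a = lift A (P4 A S)"
  define e where "e = EE A 3"
  define t where "t = tns A (jw A 3) (idn A 2)"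
  have ha: "a \<in> Hom A 5 5" unfolding a_def by (rule tyR2 hP4 | simp)+
  have he: "e \<in> Hom A 5 5" unfolding e_def by (rule EE_hom; simp)
  have ht: "t \<in> Hom A 5 5" unfolding t_def by (rule tyR hj3 | simp)+
  have aa: "cmp A a a = a" unfolding a_def using lift_cmp[OF hP4 hP4] P4P4 by simp
  have hP4': "P4 A S \<in> Hom A (Suc 3) (Suc 3)" using hP4 by simp
  have eae: "cmp A (cmp A e a) e = scl A (3/4) (cmp A t e)"
  proof -
    have "cmp A (cmp A e a) e = cmp A (tns A (ptr A 3 (P4 A S)) (idn A 2)) e"
      unfolding e_def a_def by (rule E_sandwich[OF hP4'])
    also have "\<dots> = cmp A (scl A (3/4) t) e" unfolding pP4 t_def using tns_scl_l[OF hj3 idn_hom] by simp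
    also have "\<dots> = scl A (3/4) (cmp A t e)" by (rule cmp_scl_l[OF he ht])
    finally show ?thesis .
  qed
  have at: "cmp A a t = a"
  proof -
    have "t = lift A (lift A (jw A 3))" unfolding t_def by (rule lift2[OF hj3, symmetric])
    then show ?thesis unfolding a_def using lift_cmp[OF hl3 hP4] P4l by simp
  qed
  have cr: "(4/3::complex) * (3/4) = 1" by simp
  have P5d: "P5 A S = a - scl A (4/3) (cmp A (cmp A a e) a)"
  proof -
    have "TLe A 5 4 = EE A 3" using TLe_EE[of 3] by (simp add: numeral_eq_Suc)
    then show ?thesis unfolding P5_def a_def e_def lift_def by (simp add: Let_def)
  qed
  note J5 = jwstep[OF ha he ht aa eae at cr]
  have P5P5: "cmp A (P5 A S) (P5 A S) = P5 A S" unfolding P5d by (rule J5(1))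
  have hP5: "P5 A S \<in> Hom A 5 5" unfolding P5d by (rule J5(4))
  have hP4s: "P4 A S \<in> Hom A (Suc 3) (Suc 3)" using hP4 by simp
  have he': "e \<in> Hom A (Suc 4) (Suc 4)" using he by simp
  have hae: "cmp A (cmp A a e) a \<in> Hom A (Suc 4) (Suc 4)" using ha he by (simp add: nnR)
  have ha': "a \<in> Hom A (Suc 4) (Suc 4)" using ha by simp
  have pP5: "ptr A 4 (P5 A S) = scl A (2/3) (P4 A S)"
  proof -
    have "ptr A 4 (P5 A S) = ptr A 4 a - scl A (4/3) (ptr A 4 (cmp A (cmp A a e) a))"
      unfolding P5d using ha' hae by (simp add: ptr_diff ptr_scl hom_scl)
    also have "ptr A 4 a = scl A 2 (P4 A S)" unfolding a_def by (rule ptr_lift[OF loop hP4])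
    also have "ptr A 4 (cmp A (cmp A a e) a) = cmp A (cmp A (P4 A S) (ptr A 4 e)) (P4 A S)"
      unfolding a_def by (rule ptr_nat[OF hP4 hP4 he'])
    also have "ptr A 4 e = idn A 4" unfolding e_def using ptr_E[of 3] by simp
    also have "cmp A (cmp A (P4 A S) (idn A 4)) (P4 A S) = P4 A S" using cmp_id_r[OF hP4] P4P4 by simp
    also have "scl A 2 (P4 A S) - scl A (4/3) (P4 A S) = scl A (2/3) (P4 A S)"
      by (simp add: scl_diff_l[symmetric])
    finally show ?thesis .
  qed
  define b where "b = lift A (P5 A S)"
  define f where "f = EE A 4"
  have hb: "b \<in> Hom A (Suc 5) (Suc 5)" unfolding b_def by (rule tyR2 hP5 | simp)+
  have hf: "f \<in> Hom A (Suc 5) (Suc 5)" unfolding f_def by (rule EE_hom; simp)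
  have hbf: "cmp A (cmp A b f) b \<in> Hom A (Suc 5) (Suc 5)" using hb hf by (simp add: nnR)
  have P6d: "P6 A S = b - scl A (3/2) (cmp A (cmp A b f) b)"
  proof -
    have "TLe A 6 5 = EE A 4" using TLe_EE[of 4] by (simp add: numeral_eq_Suc)
    then show ?thesis unfolding P6_def b_def f_def lift_def by (simp add: Let_def)
  qed
  have hf': "f \<in> Hom A (Suc 5) (Suc 5)" by (rule hf)
  have pP6: "ptr A 5 (P6 A S) = scl A (1/2) (P5 A S)"
  proof -
    have "ptr A 5 (P6 A S) = ptr A 5 b - scl A (3/2) (ptr A 5 (cmp A (cmp A b f) b))"
      unfolding P6d using hb hbf by (simp add: ptr_diff ptr_scl hom_scl)
    also have "ptr A 5 b = scl A 2 (P5 A S)" unfolding b_def by (rule ptr_lift[OF loop hP5])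
    also have "ptr A 5 (cmp A (cmp A b f) b) = cmp A (cmp A (P5 A S) (ptr A 5 f)) (P5 A S)"
      unfolding b_def by (rule ptr_nat[OF hP5 hP5 hf'])
    also have "ptr A 5 f = idn A 5" unfolding f_def using ptr_E[of 4] by simp
    also have "cmp A (cmp A (P5 A S) (idn A 5)) (P5 A S) = P5 A S" using cmp_id_r[OF hP5] P5P5 by simp
    also have "scl A 2 (P5 A S) - scl A (3/2) (P5 A S) = scl A (1/2) (P5 A S)"
      by (simp add: scl_diff_l[symmetric])
    finally show ?thesis .
  qed
  have i0: "idn A 0 \<in> Hom A 0 0" by (rule idn_hom)
  have t0: "tr A 0 (idn A 0) = idn A 0" by (rule tr_0[OF i0])
  have t1: "tr A 1 (idn A 1) = scl A 2 (idn A 0)"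
  proof -
    have "tr A (Suc 0) (idn A (Suc 0)) = tr A 0 (ptr A 0 (idn A (Suc 0)))" by (rule tr_Suc[OF idn_hom])
    also have "\<dots> = scl A 2 (idn A 0)" using pj1 tr_0[OF hom_scl[OF i0]] by simp
    finally show ?thesis by simp
  qed
  have t2: "tr A 2 (jw A 2) = scl A 3 (idn A 0)"
  proof -
    have "tr A 2 (jw A 2) = tr A 1 (ptr A 1 (jw A 2))"
      using tr_Suc[of "jw A 2" 1] hj2 by (simp add: numeral_eq_Suc del: jw.simps)
    also have "\<dots> = scl A (3/2) (tr A 1 (idn A 1))" unfolding pj2 j1 by (rule tr_scl[OF idn_hom])
    finally show ?thesis unfolding t1 by (simp add: scl_scl)
  qed
  have t3: "tr A 3 (jw A 3) = scl A 4 (idn A 0)"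
  proof -
    have "tr A 3 (jw A 3) = tr A 2 (ptr A 2 (jw A 3))"
      using tr_Suc[of "jw A 3" 2] hj3 by (simp add: numeral_eq_Suc del: jw.simps)
    also have "\<dots> = scl A (4/3) (tr A 2 (jw A 2))" unfolding pj3 by (rule tr_scl[OF hj2])
    finally show ?thesis unfolding t2 by (simp add: scl_scl)
  qed
  have t4: "tr A 4 (P4 A S) = scl A 3 (idn A 0)"
  proof -
    have "tr A 4 (P4 A S) = tr A 3 (ptr A 3 (P4 A S))"
      using tr_Suc[of "P4 A S" 3] hP4 by (simp add: numeral_eq_Suc del: jw.simps)
    also have "\<dots> = scl A (3/4) (tr A 3 (jw A 3))" unfolding pP4 by (rule tr_scl[OF hj3])
    finally show ?thesis unfolding t3 by (simp add: scl_scl)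
  qed
  have hQ4: "Q4 A S \<in> Hom A 4 4" unfolding Q4_def using hj4 hS by (simp add: nnR)
  have t4q: "tr A 4 (Q4 A S) = scl A 2 (idn A 0)"
  proof -
    have "tr A 4 (Q4 A S) = tr A 3 (ptr A 3 (Q4 A S))"
      using tr_Suc[of "Q4 A S" 3] hQ4 by (simp add: numeral_eq_Suc del: jw.simps)
    also have "\<dots> = scl A (1/2) (tr A 3 (jw A 3))" unfolding pQ4 by (rule tr_scl[OF hj3])
    finally show ?thesis unfolding t3 by (simp add: scl_scl)
  qed
  have t5: "tr A 5 (P5 A S) = scl A 2 (idn A 0)"
  proof -
    have "tr A 5 (P5 A S) = tr A 4 (ptr A 4 (P5 A S))"
      using tr_Suc[of "P5 A S" 4] hP5 by (simp add: numeral_eq_Suc del: jw.simps)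
    also have "\<dots> = scl A (2/3) (tr A 4 (P4 A S))" unfolding pP5 by (rule tr_scl[OF hP4])
    finally show ?thesis unfolding t4 by (simp add: scl_scl)
  qed
  have hP6: "P6 A S \<in> Hom A 6 6" unfolding P6d using hb hbf by (simp add: nnR)
  have t6: "tr A 6 (P6 A S) = idn A 0"
  proof -
    have "tr A 6 (P6 A S) = tr A 5 (ptr A 5 (P6 A S))"
      using tr_Suc[of "P6 A S" 5] hP6 by (simp add: numeral_eq_Suc del: jw.simps)
    also have "\<dots> = scl A (1/2) (tr A 5 (P5 A S))" unfolding pP6 by (rule tr_scl[OF hP5])
    finally show ?thesis unfolding t5 by (simp add: scl_scl scl_one)
  qed
  show ?thesis using t0 t1 t2 t3 t4 t5 t6 t4q by blast
qed


end
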